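(* Let $h$ be a nonzero integer and let $\boldsymbol{\alpha}$ be a smooth section of $\gamma_h$. Then $$\mathbf{J}_\parallel\boldsymbol{\alpha}=(\mathcal{P}\circ\mathbf{S})\boldsymbol{\alpha},\qquad \mathbf{J}_\perp\boldsymbol{\alpha}=(\mathcal{P}\circ\mathbf{L})\boldsymbol{\alpha},$$ i.e. componentwise $J_{\parallel,a}=\mathcal{P}\circ S_a$ and $J_{\perp,a}=\mathcal{P}\circ L_a$ for $a=x,y,z$. In particular $$\mathbf{J}=(\hat{\mathbf{k}}\cdot\mathbf{J})\hat{\mathbf{k}}+\mathcal{P}\circ\mathbf{L}.$$
   Context: Momentum space is $\mathcal{L}_+\cong\mathbb{R}^3\setminus\{0\}$, with points $\mathbf{k}$ and $\hat{\mathbf{k}}=\mathbf{k}/|\mathbf{k}|$. For each $\mathbf{k}$, let $(\mathbf{E}_1,\mathbf{E}_2,\hat{\mathbf{k}})$ be any right-handed orthonormal basis of $\mathbb{R}^3$; the line $\gamma_\pm(\mathbf{k})=\{c(\mathbf{E}_1\pm i\mathbf{E}_2):c\in\mathbb{C}\}\subset\mathbb{C}^3$ is independent of this choice, and these lines form the complex line bundles $\gamma_+$ (right) and $\gamma_-$ (left) over $\mathcal{L}_+$. For a nonzero integer $h$, $\gamma_h$ is the line bundle with fiber $\gamma_h(\mathbf{k})=\gamma_\pm(\mathbf{k})^{\otimes|h|}\subset(\mathbb{C}^3)^{\otimes|h|}$, the sign being that of $h$. A rotation $R\in\mathrm{SO}(3)$ acts on sections by $(R\boldsymbol{\alpha})(\mathbf{k})=R^{\otimes|h|}\boldsymbol{\alpha}(R^{-1}\mathbf{k})$.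 The total angular momentum $\mathbf{J}$ is defined, for a unit vector $\hat{\mathbf{v}}$, by $[(\hat{\mathbf{v}}\cdot\mathbf{J})\boldsymbol{\alpha}](\mathbf{k})=i\frac{d}{d\psi}\big|_{\psi=0}\mathbf{R}^{\psi}_{\hat{\mathbf{v}}}\boldsymbol{\alpha}(\mathbf{R}^{-\psi}_{\hat{\mathbf{v}}}\mathbf{k})$, where $\mathbf{R}^\psi_{\hat{\mathbf{v}}}$ is rotation by angle $\psi$ about $\hat{\mathbf{v}}$ (acting as $(\mathbf{R}^\psi_{\hat{\mathbf{v}}})^{\otimes|h|}$ on fibers). Define $\mathbf{J}_\parallel=(\hat{\mathbf{k}}\cdot\mathbf{J})\hat{\mathbf{k}}$ (i.e. $(J_{\parallel,a}\boldsymbol{\alpha})(\mathbf{k})=\hat k_a\,((\hat{\mathbf{k}}\cdot\mathbf{J})\boldsymbol{\alpha})(\mathbf{k})$) and $\mathbf{J}_\perp=\mathbf{J}-\mathbf{J}_\parallel$. $\mathbf{S}$ is the spin-1 operator on $\mathbb{C}^3$, $(S_a)_{bc}=-i\epsilon_{abc}$, and $\mathbf{L}=-i\,\mathbf{k}\times\nabla_{\mathbf{k}}$ is the orbital operator acting componentwise on $\mathbb{C}^3$-valued functions (in spherical coordinates $\mathbf{L}=-i(\hat{\mathbf{e}}_\phi\partial_\theta-\hat{\mathbf{e}}_\theta\frac{1}{\sin\theta}\partial_\phi)$). On $(\mathbb{C}^3)^{\otimes|h|}$-valued functions, $\mathbf{S}$ and $\mathbf{L}$ act by the Leibniz rule: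 $\mathbf{S}(\mathbf{v}_1\otimes\cdots\otimes\mathbf{v}_{|h|})=\sum_m\mathbf{v}_1\otimes\cdots\otimes\mathbf{S}\mathbf{v}_m\otimes\cdots\otimes\mathbf{v}_{|h|}$, and $\mathcal{P}$ denotes pointwise orthogonal projection of $(\mathbb{C}^3)^{\otimes|h|}$ onto $\gamma_h(\mathbf{k})$ (for $|h|=1$, projection of $\mathbb{C}^3$ onto $\gamma_\pm(\mathbf{k})$, which annihilates $\hat{\mathbf{k}}$-components); for $|h|>1$, $\mathcal{P}\circ\mathbf{S}$ and $\mathcal{P}\circ\mathbf{L}$ are defined on products of sections of $\gamma_\pm$ by the same Leibniz rule applied with the $|h|=1$ projected operators. *)

theory Defs
  imports "HOL-Analysis.Analysis" "HOL-Analysis.Cross3"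
begin

(* Momentum vectors: real^3.  A rank-n tensor in (C^3)^{\<otimes>n} is represented by its
   component function on index lists of length n (entries of the list range over the
   index type 3 = {x,y,z}); values on lists of other lengths are irrelevant. *)
type_synonym tensor = "3 list \<Rightarrow> complex"

definition Idx :: "nat \<Rightarrow> 3 list set" where
  "Idx n = {xs. length xs = n}"

definition khat :: "real^3 \<Rightarrow> real^3" where
  "khat k = (1 / norm k) *\<^sub>R k"

definition eps :: "3 \<Rightarrow> 3 \<Rightarrow> 3 \<Rightarrow> real" where
  "eps a b c = (cross3 (axis a 1) (axis b 1)) $ c"

definition rhONB :: "real^3 \<Rightarrow> real^3 \<Rightarrow> real^3 \<Rightarrow> bool" where
  "rhONB E1 E2 u \<longleftrightarrow> norm E1 = 1 \<and> norm E2 = 1 \<and> norm u = 1 \<and>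
     inner E1 E2 = 0 \<and> inner E1 u = 0 \<and> inner E2 u = 0 \<and> cross3 E1 E2 = u"

definition pol :: "int \<Rightarrow> real^3 \<Rightarrow> real^3 \<Rightarrow> 3 \<Rightarrow> complex" where
  "pol s E1 E2 j = complex_of_real (E1 $ j) + \<i> * of_int s * complex_of_real (E2 $ j)"

definition tpow :: "(3 \<Rightarrow> complex) \<Rightarrow> tensor" where
  "tpow e xs = prod_list (map e xs)"

definition fiber :: "int \<Rightarrow> real^3 \<Rightarrow> tensor set" where
  "fiber h k = {T. \<exists>E1 E2 c. rhONB E1 E2 (khat k) \<and>
      (\<forall>xs\<in>Idx (nat \<bar>h\<bar>). T xs = c * tpow (pol (sgn h) E1 E2) xs)}"

fun Ck_on :: "nat \<Rightarrow> (real^3) set \<Rightarrow> (real^3 \<Rightarrow> complex) \<Rightarrow> bool" where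
  "Ck_on 0 S f = continuous_on S f"
| "Ck_on (Suc m) S f = (f differentiable_on S \<and>
      (\<forall>c. Ck_on m S (\<lambda>k. frechet_derivative f (at k) (axis c 1))))"

definition smooth_on3 :: "(real^3) set \<Rightarrow> (real^3 \<Rightarrow> complex) \<Rightarrow> bool" where
  "smooth_on3 S f \<longleftrightarrow> (\<forall>m. Ck_on m S f)"

definition is_section :: "int \<Rightarrow> (real^3 \<Rightarrow> tensor) \<Rightarrow> bool" where
  "is_section h \<alpha> \<longleftrightarrow> (\<forall>k. k \<noteq> 0 \<longrightarrow> \<alpha> k \<in> fiber h k) \<and>
      (\<forall>xs\<in>Idx (nat \<bar>h\<bar>). smooth_on3 (- {0}) (\<lambda>k. \<alpha> k xs))"

(* rotation by angle psi about the unit vector v (Rodrigues formula) *)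
definition rotv :: "real^3 \<Rightarrow> real \<Rightarrow> real^3 \<Rightarrow> real^3" where
  "rotv v \<psi> w = cos \<psi> *\<^sub>R w + sin \<psi> *\<^sub>R cross3 v w + ((1 - cos \<psi>) * inner v w) *\<^sub>R v"

definition rotT :: "nat \<Rightarrow> real^3 \<Rightarrow> real \<Rightarrow> tensor \<Rightarrow> tensor" where
  "rotT n v \<psi> T xs = (\<Sum>ys\<in>Idx n.
      (\<Prod>m<n. complex_of_real (rotv v \<psi> (axis (ys ! m) 1) $ (xs ! m))) * T ys)"

definition Jv :: "int \<Rightarrow> real^3 \<Rightarrow> (real^3 \<Rightarrow> tensor) \<Rightarrow> real^3 \<Rightarrow> tensor" where
  "Jv h v \<alpha> k xs = \<i> * vector_derivative
      (\<lambda>\<psi>. rotT (nat \<bar>h\<bar>) v \<psi> (\<alpha> (rotv v (- \<psi>) k)) xs) (at 0)"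

definition Jc :: "int \<Rightarrow> 3 \<Rightarrow> (real^3 \<Rightarrow> tensor) \<Rightarrow> real^3 \<Rightarrow> tensor" where
  "Jc h a \<alpha> = Jv h (axis a 1) \<alpha>"

definition Jpar :: "int \<Rightarrow> 3 \<Rightarrow> (real^3 \<Rightarrow> tensor) \<Rightarrow> real^3 \<Rightarrow> tensor" where
  "Jpar h a \<alpha> k xs = complex_of_real (khat k $ a) * Jv h (khat k) \<alpha> k xs"

definition Jperp :: "int \<Rightarrow> 3 \<Rightarrow> (real^3 \<Rightarrow> tensor) \<Rightarrow> real^3 \<Rightarrow> tensor" where
  "Jperp h a \<alpha> k xs = Jc h a \<alpha> k xs - Jpar h a \<alpha> k xs"

(* S_a on rank-n tensors, Leibniz rule, (S_a)_{bc} = -i eps_{abc} *)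
definition Sop :: "nat \<Rightarrow> 3 \<Rightarrow> tensor \<Rightarrow> tensor" where
  "Sop n a T xs = (\<Sum>m<n. \<Sum>c\<in>UNIV. - \<i> * complex_of_real (eps a (xs ! m) c) * T (xs[m := c]))"

definition pd :: "3 \<Rightarrow> (real^3 \<Rightarrow> complex) \<Rightarrow> real^3 \<Rightarrow> complex" where
  "pd c g k = vector_derivative (\<lambda>t. g (k + t *\<^sub>R axis c 1)) (at 0)"

definition Lop :: "3 \<Rightarrow> (real^3 \<Rightarrow> tensor) \<Rightarrow> real^3 \<Rightarrow> tensor" where
  "Lop a \<alpha> k xs = - \<i> * (\<Sum>b\<in>UNIV. \<Sum>c\<in>UNIV.
      complex_of_real (eps a b c * k $ b) * pd c (\<lambda>k'. \<alpha> k' xs) k)"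

(* pointwise orthogonal projection of (C^3)^{\<otimes>n} onto gamma_h(k) = span of u = (E1 +- iE2)^{\<otimes>n} *)
definition Proj :: "int \<Rightarrow> real^3 \<Rightarrow> tensor \<Rightarrow> tensor" where
  "Proj h k T xs =
     (let F = (SOME F. rhONB (fst F) (snd F) (khat k));
          u = tpow (pol (sgn h) (fst F) (snd F));
          n = nat \<bar>h\<bar>
      in (\<Sum>ys\<in>Idx n. cnj (u ys) * T ys) / (\<Sum>ys\<in>Idx n. cnj (u ys) * u ys) * u xs)"

definition PS :: "int \<Rightarrow> 3 \<Rightarrow> (real^3 \<Rightarrow> tensor) \<Rightarrow> real^3 \<Rightarrow> tensor" where
  "PS h a \<alpha> k = Proj h k (Sop (nat \<bar>h\<bar>) a (\<alpha> k))"

definition PL :: "int \<Rightarrow> 3 \<Rightarrow> (real^3 \<Rightarrow> tensor) \<Rightarrow> real^3 \<Rightarrow> tensor" where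
  "PL h a \<alpha> k = Proj h k (Lop a \<alpha> k)"

end

theory Submission
  imports Defs
begin

lemma Idx_Suc: "Idx (Suc n) = (\<lambda>(y,ys). y # ys) ` (UNIV \<times> Idx n)"
  unfolding Idx_def by (auto simp: image_iff length_Suc_conv)

lemma finite_Idx[simp]: "finite (Idx n)"
proof (induction n)
  case 0 then show ?case by (simp add: Idx_def)
next
  case (Suc n) then show ?case by (simp add: Idx_Suc)
qed

lemma sum_prod_Idx:
  "(\<Sum>ys\<in>Idx n. \<Prod>m<n. f m (ys ! m)) = (\<Prod>m<n. \<Sum>y\<in>UNIV. (f m y :: 'a::comm_semiring_1))"
proof (induction n arbitrary: f)
  case 0 then show ?case by (simp add: Idx_def)
next
  case (Suc n)
  have inj: "inj_on (\<lambda>(y,ys). y # ys) (UNIV \<times> Idx n)" by (auto simp: inj_on_def)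
  have "(\<Sum>ys\<in>Idx (Suc n). \<Prod>m<Suc n. f m (ys ! m))
      = (\<Sum>(y,ys)\<in>UNIV \<times> Idx n. \<Prod>m<Suc n. f m ((y#ys) ! m))"
    unfolding Idx_Suc by (subst sum.reindex[OF inj]) (simp add: case_prod_beta)
  also have "\<dots> = (\<Sum>(y,ys)\<in>UNIV \<times> Idx n. f 0 y * (\<Prod>m<n. f (Suc m) (ys ! m)))"
    by (simp del: prod.lessThan_Suc add: prod.lessThan_Suc_shift)
  also have "\<dots> = (\<Sum>y\<in>UNIV. f 0 y) * (\<Sum>ys\<in>Idx n. \<Prod>m<n. f (Suc m) (ys ! m))"
    by (simp add: sum_product sum.cartesian_product)
  also have "\<dots> = (\<Sum>y\<in>UNIV. f 0 y) * (\<Prod>m<n. \<Sum>y\<in>UNIV. f (Suc m) y)"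
    using Suc[of "\<lambda>m. f (Suc m)"] by simp
  also have "\<dots> = (\<Prod>m<Suc n. \<Sum>y\<in>UNIV. f m y)"
    by (simp del: prod.lessThan_Suc add: prod.lessThan_Suc_shift)
  finally show ?case .
qed

lemma tpow_prod0: "tpow e ys = (\<Prod>m<length ys. e (ys ! m))"
  unfolding tpow_def by (induction ys) (simp_all del: prod.lessThan_Suc add: prod.lessThan_Suc_shift)

lemma tpow_prod: "ys \<in> Idx n \<Longrightarrow> tpow e ys = (\<Prod>m<n. e (ys ! m))"
  unfolding Idx_def by (simp add: tpow_prod0)

lemma cs1: "cos p * cos p + sin p * sin p = 1" for p :: real
  by (metis sin_cos_squared_add3 add.commute)

lemma vv1: "norm (v::real^3) = 1 \<Longrightarrow> inner v v = 1"
  by (simp add: norm_eq_1)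

lemma I1: "cross3 a (cross3 b c) = inner a c *\<^sub>R b - inner a b *\<^sub>R c"
  by (simp add: cross3_simps forall_3)
lemma I2: "inner (cross3 a b) (cross3 c d) = inner a c * inner b d - inner a d * inner b c"
  by (simp add: cross3_simps forall_3)
lemma I3: "cross3 (cross3 a b) c = inner a c *\<^sub>R b - inner b c *\<^sub>R a"
  by (simp add: cross3_simps forall_3)
lemma I4: "inner (cross3 a b) c = inner a (cross3 b c)"
  by (simp add: cross3_simps forall_3)
lemma I5: "inner v v *\<^sub>R cross3 a b = inner v b *\<^sub>R cross3 a v + inner v a *\<^sub>R cross3 v b + inner v (cross3 a b) *\<^sub>R v"
  by (simp add: cross3_simps forall_3)

lemma rotv_inner:
  assumes "norm v = 1"
  shows "inner (rotv v p a) (rotv v p b) = inner a b"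
proof -
  have f1: "inner (cross3 v a) b = - inner a (cross3 v b)" by (simp add: cross3_simps forall_3)
  have f2: "inner (cross3 v a) (cross3 v b) = inner a b - inner v a * inner v b"
    using vv1[OF assms] by (simp add: I2 inner_commute)
  have f3: "inner (cross3 v a) v = 0" by (simp add: cross3_simps forall_3)
  have f4: "inner v (cross3 v b) = 0" by (simp add: cross3_simps forall_3)
  have f5: "inner v v = 1" using vv1[OF assms] .
  have f6: "inner a v = inner v a" by (simp add: inner_commute)
  have cs: "cos p * cos p + sin p * sin p = 1" by (rule cs1)
  show ?thesis unfolding rotv_def
    apply (simp only: inner_add_left inner_add_right inner_scaleR_left inner_scaleR_right f1 f2 f3 f4 f5 f6)
    using cs by algebra
qed

lemma rotv_inv:
  assumes "norm v = 1"
  shows "rotv v p (rotv v (-p) k) = k"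
proof -
  have f5: "inner v v = 1" using vv1[OF assms] .
  have g1: "cross3 v (cross3 v k) = inner v k *\<^sub>R v - k" using f5 by (simp add: I1)
  have g2: "inner v (cross3 v k) = 0" by (simp add: cross3_simps forall_3)
  have cs: "cos p * cos p + sin p * sin p = 1" by (rule cs1)
  show ?thesis unfolding rotv_def
    apply (simp only: cross_add_right cross_mult_right inner_add_right inner_scaleR_right g1 g2 f5
       cross_refl cos_minus sin_minus right_diff_distrib scaleR_zero_right)
    apply (simp only: vec_eq_iff forall_3 vector_add_component vector_scaleR_component vector_minus_component
         vector_uminus_component zero_index real_scaleR_def)
    using cs by (intro conjI; algebra)
qed

lemma rotv_cross:
  assumes "norm v = 1"
  shows "cross3 (rotv v p a) (rotv v p b) = rotv v p (cross3 a b)"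
proof -
  have f5: "inner v v = 1" using vv1[OF assms] .
  define q where "q = inner v (cross3 a b)"
  have g1: "cross3 a (cross3 v b) = inner a b *\<^sub>R v - inner v a *\<^sub>R b" by (simp add: I1 inner_commute)
  have g2: "cross3 (cross3 v a) b = inner v b *\<^sub>R a - inner a b *\<^sub>R v" by (simp add: I3)
  have g3: "cross3 (cross3 v a) (cross3 v b) = q *\<^sub>R v"
    unfolding q_def by (simp add: cross3_simps forall_3)
  have g4: "cross3 (cross3 v a) v = a - inner v a *\<^sub>R v" using f5 by (simp add: I3 inner_commute)
  have g5: "cross3 v (cross3 v b) = inner v b *\<^sub>R v - b" using f5 by (simp add: I1)
  have g7: "cross3 a v = - cross3 v a" by (metis cross_skew)
  have g8: "cross3 v (cross3 a b) = inner v b *\<^sub>R a - inner v a *\<^sub>R b" by (simp add: I1)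
  have g9: "cross3 a b = - inner v b *\<^sub>R cross3 v a + inner v a *\<^sub>R cross3 v b + q *\<^sub>R v"
    using I5[of v a b] f5 g7 unfolding q_def by simp
  have cs: "cos p * cos p + sin p * sin p = 1" by (rule cs1)
  show ?thesis unfolding rotv_def
    apply (simp only: cross_add_right cross_add_left cross_mult_right cross_mult_left
       g1 g2 g3 g4 g5 g7 g8 q_def[symmetric] cross_refl scaleR_zero_right cross_zero_left cross_zero_right)
    apply (simp only: g9)
    apply (simp only: vec_eq_iff forall_3 vector_add_component vector_scaleR_component vector_minus_component
         vector_uminus_component zero_index real_scaleR_def)
    using cs by (intro conjI; algebra)
qed

lemma onb_complete:
  assumes "rhONB E1 E2 u"
  shows "w = inner w E1 *\<^sub>R E1 + inner w E2 *\<^sub>R E2 + inner w u *\<^sub>R u"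
proof -
  have n: "inner E1 E1 = 1" "inner E2 E2 = 1" "inner u u = 1" "inner E1 E2 = 0"
    using assms unfolding rhONB_def by (auto simp: vv1)
  have u: "u = cross3 E1 E2" using assms unfolding rhONB_def by simp
  have h1: "cross3 u (cross3 w u) = w - inner u w *\<^sub>R u" using n by (simp add: I1)
  have h2: "cross3 w u = inner w E2 *\<^sub>R E1 - inner w E1 *\<^sub>R E2" unfolding u by (simp add: I1)
  have h3: "cross3 u E1 = E2" "cross3 u E2 = - E1" unfolding u using n by (simp_all add: I3 inner_commute)
  have "w - inner u w *\<^sub>R u = inner w E2 *\<^sub>R E2 + inner w E1 *\<^sub>R E1"
    using h1 h2 h3 by (simp add: Cross3.right_diff_distrib cross_mult_right)
  then show ?thesis by (simp add: algebra_simps inner_commute)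
qed

lemma onb_cross:
  assumes "rhONB E1 E2 u"
  shows "cross3 u E1 = E2" "cross3 u E2 = - E1"
proof -
  have n: "inner E1 E1 = 1" "inner E2 E2 = 1" "inner E1 E2 = 0"
    using assms unfolding rhONB_def by (auto simp: vv1)
  have u: "u = cross3 E1 E2" using assms unfolding rhONB_def by simp
  show "cross3 u E1 = E2" "cross3 u E2 = - E1" unfolding u using n by (simp_all add: I3 inner_commute)
qed

lemma onb_change:
  assumes E: "rhONB E1 E2 u" and F: "rhONB F1 F2 u" and s: "s * s = (1::int)"
  shows "pol s F1 F2 j = (complex_of_real (inner F1 E1) - \<i> * of_int s * complex_of_real (inner F1 E2)) * pol s E1 E2 j"
proof -
  define a where "a = inner F1 E1"
  define b where "b = inner F1 E2"
  have Fu: "inner F1 u = 0" using F unfolding rhONB_def by simp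
  have F1: "F1 = a *\<^sub>R E1 + b *\<^sub>R E2"
    using onb_complete[OF E, of F1] Fu unfolding a_def b_def by simp
  have F2: "F2 = cross3 u F1" using onb_cross(1)[OF F] by simp
  have F2': "F2 = a *\<^sub>R E2 - b *\<^sub>R E1"
    unfolding F2 by (subst F1) (simp add: cross_add_right cross_mult_right onb_cross[OF E])
  have s': "(of_int s :: complex) * of_int s = 1" using s by (metis of_int_mult of_int_1)
  have "pol s F1 F2 j = of_real (a * E1$j + b * E2$j) + \<i> * of_int s * of_real (a * E2$j - b * E1$j)"
    unfolding pol_def by (subst F2', subst F1, simp)
  also have "\<dots> = (of_real a - \<i> * of_int s * of_real b) * pol s E1 E2 j"
    unfolding pol_def using s' by (simp add: algebra_simps)
  finally show ?thesis unfolding a_def b_def .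
qed

lemma rotv_lin: "rotv v p w $ x = (\<Sum>y\<in>UNIV. w$y * rotv v p (axis y 1) $ x)"
  using exhaust_3[of x] by (elim disjE) (simp_all add: rotv_def cross3_simps sum_3 axis_def)

lemma rotv_scale: "rotv v p (r *\<^sub>R w) = r *\<^sub>R rotv v p w"
  by (simp add: rotv_def cross_mult_right algebra_simps)

lemma rotv_norm: "norm v = 1 \<Longrightarrow> norm (rotv v p w) = norm w"
  by (simp add: norm_eq_sqrt_inner rotv_inner)

lemma khat_rotv: "norm v = 1 \<Longrightarrow> khat (rotv v p w) = rotv v p (khat w)"
  by (simp add: khat_def rotv_norm rotv_scale)

lemma rhONB_rotv:
  assumes "norm v = 1" "rhONB E1 E2 u"
  shows "rhONB (rotv v p E1) (rotv v p E2) (rotv v p u)"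
  using assms unfolding rhONB_def by (simp add: rotv_norm rotv_inner rotv_cross)

lemma rotv_0: "rotv v 0 w = w"
  by (simp add: rotv_def)

lemma sgn_sq: "h \<noteq> 0 \<Longrightarrow> sgn h * sgn h = (1::int)"
  by (simp add: sgn_if)

lemma pol_norm:
  assumes "rhONB E1 E2 u" "s * s = (1::int)"
  shows "(\<Sum>y\<in>UNIV. cnj (pol s E1 E2 y) * pol s E1 E2 y) = 2"
proof -
  have s: "(of_int s :: real) * of_int s = 1" using assms(2) by (metis of_int_mult of_int_1)
  have "\<And>y. cnj (pol s E1 E2 y) * pol s E1 E2 y = of_real (E1$y * E1$y + E2$y * E2$y)"
    unfolding pol_def using s by (simp add: complex_eq_iff algebra_simps)
  then have "(\<Sum>y\<in>UNIV. cnj (pol s E1 E2 y) * pol s E1 E2 y) = of_real (inner E1 E1 + inner E2 E2)"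
    by (simp add: inner_vec_def sum.distrib)
  also have "\<dots> = 2" using assms(1) unfolding rhONB_def by (simp add: vv1)
  finally show ?thesis .
qed

definition FF :: "real^3 \<Rightarrow> (real^3) \<times> (real^3)" where
  "FF k = (SOME F. rhONB (fst F) (snd F) (khat k))"

definition uu :: "int \<Rightarrow> real^3 \<Rightarrow> tensor" where
  "uu h k = tpow (pol (sgn h) (fst (FF k)) (snd (FF k)))"

definition ip :: "nat \<Rightarrow> tensor \<Rightarrow> tensor \<Rightarrow> complex" where
  "ip n u T = (\<Sum>ys\<in>Idx n. cnj (u ys) * T ys)"

lemma Proj_eq: "Proj h k T xs = ip (nat \<bar>h\<bar>) (uu h k) T / ip (nat \<bar>h\<bar>) (uu h k) (uu h k) * uu h k xs"
  unfolding Proj_def uu_def FF_def ip_def Let_def by simp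

lemma FF_ok: "rhONB E1 E2 (khat k) \<Longrightarrow> rhONB (fst (FF k)) (snd (FF k)) (khat k)"
  unfolding FF_def by (rule someI_ex[where P="\<lambda>F. rhONB (fst F) (snd F) (khat k)"]) auto

lemma ip_uu:
  assumes "rhONB E1 E2 (khat k)" "h \<noteq> 0"
  shows "ip n (uu h k) (uu h k) = 2 ^ n"
proof -
  let ?e = "pol (sgn h) (fst (FF k)) (snd (FF k))"
  have "ip n (uu h k) (uu h k) = (\<Sum>ys\<in>Idx n. \<Prod>m<n. cnj (?e (ys!m)) * ?e (ys!m))"
    unfolding ip_def uu_def by (intro sum.cong refl) (simp add: tpow_prod prod.distrib)
  also have "\<dots> = (\<Prod>m<n. \<Sum>y\<in>UNIV. cnj (?e y) * ?e y)" by (rule sum_prod_Idx)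
  also have "\<dots> = 2 ^ n" using pol_norm[OF FF_ok[OF assms(1)] sgn_sq[OF assms(2)]] by simp
  finally show ?thesis .
qed

lemma tpow_scale: "ys \<in> Idx n \<Longrightarrow> tpow (\<lambda>j. c * e j) ys = c ^ n * tpow e ys"
  by (simp add: tpow_prod prod.distrib)

lemma fiber_span:
  assumes "h \<noteq> 0" "T \<in> fiber h k"
  shows "(\<exists>E1 E2. rhONB E1 E2 (khat k)) \<and> (\<exists>c. \<forall>xs\<in>Idx (nat \<bar>h\<bar>). T xs = c * uu h k xs)"
proof -
  obtain E1 E2 c0 where E: "rhONB E1 E2 (khat k)"
    and T: "\<forall>xs\<in>Idx (nat \<bar>h\<bar>). T xs = c0 * tpow (pol (sgn h) E1 E2) xs"
    using assms(2) unfolding fiber_def by blast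
  have F: "rhONB (fst (FF k)) (snd (FF k)) (khat k)" by (rule FF_ok[OF E])
  define lam where "lam = complex_of_real (inner E1 (fst (FF k))) - \<i> * of_int (sgn h) * complex_of_real (inner E1 (snd (FF k)))"
  have pe: "pol (sgn h) E1 E2 = (\<lambda>j. lam * pol (sgn h) (fst (FF k)) (snd (FF k)) j)"
    using onb_change[OF F E sgn_sq[OF assms(1)]] unfolding lam_def by auto
  have "\<forall>xs\<in>Idx (nat \<bar>h\<bar>). T xs = (c0 * lam ^ nat \<bar>h\<bar>) * uu h k xs"
    using T unfolding pe uu_def by (simp add: tpow_scale)
  then show ?thesis using E by blast
qed

lemma ip_span: "\<forall>ys\<in>Idx n. T ys = c * u ys \<Longrightarrow> ip n u T = c * ip n u u"
  unfolding ip_def by (simp add: sum_distrib_left algebra_simps)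

lemma Proj_span:
  assumes "h \<noteq> 0" "rhONB E1 E2 (khat k)" "\<forall>ys\<in>Idx (nat \<bar>h\<bar>). T ys = c * uu h k ys"
  shows "Proj h k T xs = c * uu h k xs"
  unfolding Proj_eq ip_span[OF assms(3)] using ip_uu[OF assms(2,1)] by simp

lemma ip_cong: "\<forall>ys\<in>Idx n. T1 ys = T2 ys \<Longrightarrow> ip n u T1 = ip n u T2"
  unfolding ip_def by simp

lemma Proj_cong: "\<forall>ys\<in>Idx (nat \<bar>h\<bar>). T1 ys = T2 ys \<Longrightarrow> Proj h k T1 xs = Proj h k T2 xs"
  unfolding Proj_eq using ip_cong by metis

lemma Proj_add: "Proj h k (\<lambda>ys. T1 ys + T2 ys) xs = Proj h k T1 xs + Proj h k T2 xs"
  unfolding Proj_eq ip_def by (simp add: sum.distrib algebra_simps add_divide_distrib)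

lemma Proj_scale: "Proj h k (\<lambda>ys. c * T ys) xs = c * Proj h k T xs"
  unfolding Proj_eq ip_def by (simp add: sum_distrib_left algebra_simps)

lemma pol_rot: "(\<Sum>y\<in>UNIV. complex_of_real (rotv v p (axis y 1) $ x) * pol s E1 E2 y)
   = pol s (rotv v p E1) (rotv v p E2) x"
  unfolding pol_def rotv_lin[of v p E1] rotv_lin[of v p E2]
  by (simp add: sum.distrib algebra_simps sum_distrib_left)

lemma rot_fiber:
  assumes h: "h \<noteq> 0" and v: "norm v = 1" and k: "k \<noteq> 0"
    and T: "T \<in> fiber h (rotv v (-p) k)"
  shows "(\<exists>E1 E2. rhONB E1 E2 (khat k)) \<and> (\<exists>c. \<forall>xs\<in>Idx (nat \<bar>h\<bar>). rotT (nat \<bar>h\<bar>) v p T xs = c * uu h k xs)"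
proof -
  let ?n = "nat \<bar>h\<bar>"
  obtain E1 E2 c0 where E: "rhONB E1 E2 (khat (rotv v (-p) k))"
    and T: "\<forall>xs\<in>Idx ?n. T xs = c0 * tpow (pol (sgn h) E1 E2) xs"
    using T unfolding fiber_def by blast
  have kk: "rotv v p (khat (rotv v (-p) k)) = khat k"
    using khat_rotv[OF v, of p "rotv v (-p) k"] rotv_inv[OF v] by simp
  have E': "rhONB (rotv v p E1) (rotv v p E2) (khat k)"
    using rhONB_rotv[OF v E, of p] kk by simp
  have "\<forall>xs\<in>Idx ?n. rotT ?n v p T xs = c0 * tpow (pol (sgn h) (rotv v p E1) (rotv v p E2)) xs"
  proof
    fix xs assume xs: "xs \<in> Idx ?n"
    have "rotT ?n v p T xs = (\<Sum>ys\<in>Idx ?n. (\<Prod>m<?n. complex_of_real (rotv v p (axis (ys ! m) 1) $ (xs ! m))) * (c0 * (\<Prod>m<?n. pol (sgn h) E1 E2 (ys ! m))))"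
      unfolding rotT_def using T by (intro sum.cong refl) (simp add: tpow_prod)
    also have "\<dots> = c0 * (\<Sum>ys\<in>Idx ?n. \<Prod>m<?n. complex_of_real (rotv v p (axis (ys ! m) 1) $ (xs ! m)) * pol (sgn h) E1 E2 (ys ! m))"
      by (simp add: sum_distrib_left prod.distrib algebra_simps)
    also have "\<dots> = c0 * (\<Prod>m<?n. \<Sum>y\<in>UNIV. complex_of_real (rotv v p (axis y 1) $ (xs ! m)) * pol (sgn h) E1 E2 y)"
      by (subst sum_prod_Idx[where f="\<lambda>m y. complex_of_real (rotv v p (axis y 1) $ (xs ! m)) * pol (sgn h) E1 E2 y"]) simp
    also have "\<dots> = c0 * tpow (pol (sgn h) (rotv v p E1) (rotv v p E2)) xs"
      using xs by (simp add: pol_rot tpow_prod)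
    finally show "rotT ?n v p T xs = c0 * tpow (pol (sgn h) (rotv v p E1) (rotv v p E2)) xs" .
  qed
  then have "rotT ?n v p T \<in> fiber h k" unfolding fiber_def using E' by blast
  then show ?thesis using fiber_span[OF h] by blast
qed

definition spin :: "nat \<Rightarrow> real^3 \<Rightarrow> tensor \<Rightarrow> tensor" where
  "spin n v T xs = (\<Sum>m<n. \<Sum>c\<in>UNIV. complex_of_real (cross3 v (axis c 1) $ (xs ! m)) * T (xs[m := c]))"

definition orb :: "real^3 \<Rightarrow> (real^3 \<Rightarrow> tensor) \<Rightarrow> real^3 \<Rightarrow> tensor" where
  "orb v \<alpha> k xs = - (\<Sum>c\<in>UNIV. complex_of_real (cross3 v k $ c) * pd c (\<lambda>k'. \<alpha> k' xs) k)"

lemma prod_indicator: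
  "finite I \<Longrightarrow> (\<Prod>m\<in>I. if P m then 1 else (0::'a::comm_semiring_1)) = (if \<forall>m\<in>I. P m then 1 else 0)"
  by (induction I rule: finite_induct) auto

lemma delta_Idx:
  assumes "ys \<in> Idx n" "xs \<in> Idx n"
  shows "(\<Prod>m<n. if ys ! m = xs ! m then 1 else (0::'a::comm_semiring_1)) = (if ys = xs then 1 else 0)"
proof -
  have "(\<forall>m\<in>{..<n}. ys ! m = xs ! m) \<longleftrightarrow> ys = xs"
    using assms unfolding Idx_def by (auto intro: nth_equalityI)
  then show ?thesis by (simp add: prod_indicator)
qed

lemma reindex_upd:
  fixes g :: "3 \<Rightarrow> complex" and T :: tensor
  assumes m: "m < n" and xs: "xs \<in> Idx n"
  shows "(\<Sum>ys\<in>Idx n. g (ys ! m) * (\<Prod>j\<in>{..<n} - {m}. if ys ! j = xs ! j then 1 else 0) * T ys)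
       = (\<Sum>c\<in>UNIV. g c * T (xs[m := c]))"
proof -
  let ?S = "range (\<lambda>c. xs[m := c])"
  have lx: "length xs = n" using xs by (simp add: Idx_def)
  have eq: "(\<Prod>j\<in>{..<n} - {m}. if ys ! j = xs ! j then 1 else 0) = (if ys \<in> ?S then 1 else (0::complex))"
    if ys: "ys \<in> Idx n" for ys
  proof -
    have ly: "length ys = n" using ys by (simp add: Idx_def)
    have "(\<forall>j\<in>{..<n} - {m}. ys ! j = xs ! j) \<longleftrightarrow> ys \<in> ?S"
    proof
      assume H: "\<forall>j\<in>{..<n} - {m}. ys ! j = xs ! j"
      have "ys = xs[m := ys ! m]" using H ly lx m by (intro nth_equalityI) (auto simp: nth_list_update)
      then show "ys \<in> ?S" by blast
    next
      assume "ys \<in> ?S"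
      then show "\<forall>j\<in>{..<n} - {m}. ys ! j = xs ! j" using lx m by (auto simp: nth_list_update split: if_splits)
    qed
    then show ?thesis by (simp add: prod_indicator)
  qed
  have sub: "?S \<subseteq> Idx n" using lx by (auto simp: Idx_def)
  have inj: "inj (\<lambda>c. xs[m := c])" using m lx by (auto simp: inj_def dest: arg_cong[where f="\<lambda>l. l ! m"])
  have "(\<Sum>ys\<in>Idx n. g (ys ! m) * (\<Prod>j\<in>{..<n} - {m}. if ys ! j = xs ! j then 1 else 0) * T ys)
      = (\<Sum>ys\<in>Idx n. if ys \<in> ?S then g (ys ! m) * T ys else 0)"
    by (intro sum.cong refl) (simp add: eq)
  also have "\<dots> = (\<Sum>ys\<in>Idx n \<inter> ?S. g (ys ! m) * T ys)"
    by (simp add: sum.inter_restrict)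
  also have "Idx n \<inter> ?S = ?S" using sub by blast
  also have "(\<Sum>ys\<in>?S. g (ys ! m) * T ys) = (\<Sum>c\<in>UNIV. g c * T (xs[m := c]))"
    using m lx by (subst sum.reindex[OF inj]) simp
  finally show ?thesis .
qed

lemma rotv_comp_deriv:
  "((\<lambda>p. complex_of_real (rotv v p w $ x)) has_vector_derivative complex_of_real (cross3 v w $ x)) (at 0)"
proof -
  have "((\<lambda>p. rotv v p w $ x) has_field_derivative
     (- sin 0 * w $ x + cos 0 * cross3 v w $ x + sin 0 * inner v w * v $ x)) (at 0)"
    unfolding rotv_def by (auto intro!: derivative_eq_intros)
  then show ?thesis by (auto intro: has_vector_derivative_of_real)
qed

lemma curve_deriv:
  "((\<lambda>p. rotv v (-p) k) has_vector_derivative (- cross3 v k)) (at 0)"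
proof -
  have "((\<lambda>p. rotv v (-p) k) has_vector_derivative
     (- sin 0 *\<^sub>R k + (- cos 0) *\<^sub>R cross3 v k + (sin 0 * inner v k) *\<^sub>R v)) (at 0)"
    unfolding rotv_def by (auto intro!: derivative_eq_intros)
  then show ?thesis by simp
qed

lemma vec_expand: "w = (\<Sum>c\<in>UNIV. (w $ c) *\<^sub>R axis c (1::real))" for w :: "real^3"
  by (simp add: vec_eq_iff sum_3 axis_def forall_3)

lemma pd_eq:
  assumes "(g has_derivative D) (at k)"
  shows "pd c g k = D (axis c 1)"
proof -
  have "((\<lambda>t. k + t *\<^sub>R axis c 1) has_vector_derivative axis c 1) (at 0)"
    by (auto intro!: derivative_eq_intros)
  moreover have "(g has_derivative D) (at ((\<lambda>t. k + t *\<^sub>R axis c (1::real)) 0) within range (\<lambda>t. k + t *\<^sub>R axis c 1))"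
    using assms by (simp add: has_derivative_at_withinI)
  ultimately have "((g \<circ> (\<lambda>t. k + t *\<^sub>R axis c 1)) has_vector_derivative D (axis c 1)) (at 0)"
    using vector_derivative_diff_chain_within[where S=UNIV] by fastforce
  then show ?thesis unfolding pd_def by (simp add: o_def vector_derivative_at)
qed

lemma orb_D:
  assumes "(g has_derivative D) (at k)"
  shows "D (- cross3 v k) = - (\<Sum>c\<in>UNIV. complex_of_real (cross3 v k $ c) * pd c g k)"
proof -
  have lin: "linear D" using has_derivative_linear[OF assms] .
  have "D (- cross3 v k) = - D (\<Sum>c\<in>UNIV. (cross3 v k $ c) *\<^sub>R axis c (1::real))"
    using vec_expand[of "cross3 v k"] lin by (metis linear_neg)
  also have "\<dots> = - (\<Sum>c\<in>UNIV. (cross3 v k $ c) *\<^sub>R D (axis c 1))"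
    using lin by (simp add: linear_sum linear_cmul o_def)
  finally show ?thesis by (simp add: pd_eq[OF assms] scaleR_conv_of_real)
qed

lemma Jv_deriv:
  assumes diff: "\<forall>ys\<in>Idx n. (\<lambda>k. \<alpha> k ys) differentiable (at k)" and xs: "xs \<in> Idx n"
  shows "((\<lambda>p. rotT n v p (\<alpha> (rotv v (-p) k)) xs) has_vector_derivative
           (spin n v (\<alpha> k) xs + orb v \<alpha> k xs)) (at 0)"
proof -
  define P where "P p ys = (\<Prod>m<n. complex_of_real (rotv v p (axis (ys ! m) 1) $ (xs ! m)))" for p ys
  define dd where "dd ys m = complex_of_real (cross3 v (axis (ys ! m) 1) $ (xs ! m))" for ys m
  define P0 where "P0 ys j = complex_of_real (rotv v 0 (axis (ys ! j) 1) $ (xs ! j))" for ys j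
  define P' where "P' ys = (\<Sum>i<n. dd ys i * (\<Prod>j\<in>{..<n} - {i}. P0 ys j))" for ys
  obtain D where D: "\<And>ys. ys \<in> Idx n \<Longrightarrow> ((\<lambda>k. \<alpha> k ys) has_derivative D ys) (at k)"
    using diff unfolding differentiable_def by metis
  have P0: "P0 ys j = (if ys ! j = xs ! j then 1 else 0)" for ys j
    unfolding P0_def rotv_0 by (simp add: axis_def)
  have dP: "((\<lambda>p. P p ys) has_vector_derivative P' ys) (at 0)" for ys
  proof -
    have "((\<lambda>p. P p ys) has_derivative
       (\<lambda>y. \<Sum>i<n. (y *\<^sub>R dd ys i) * (\<Prod>j\<in>{..<n} - {i}. P0 ys j))) (at 0)"
      unfolding P_def P0_def
      by (rule has_derivative_prod) (use rotv_comp_deriv in \<open>auto simp: has_vector_derivative_def dd_def\<close>)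
    then show ?thesis unfolding has_vector_derivative_def P'_def
      by (simp add: scaleR_sum_right mult_scaleR_left)
  qed
  have dA: "((\<lambda>p. \<alpha> (rotv v (-p) k) ys) has_vector_derivative D ys (- cross3 v k)) (at 0)"
    if ys: "ys \<in> Idx n" for ys
  proof -
    have "((\<lambda>k. \<alpha> k ys) has_derivative D ys) (at ((\<lambda>p. rotv v (-p) k) 0) within range (\<lambda>p. rotv v (-p) k))"
      using D[OF ys] by (simp add: rotv_0 has_derivative_at_withinI)
    then have "(((\<lambda>k. \<alpha> k ys) \<circ> (\<lambda>p. rotv v (-p) k)) has_vector_derivative D ys (- cross3 v k)) (at 0)"
      using vector_derivative_diff_chain_within[OF curve_deriv[of v k, unfolded at_within_open[OF _ open_UNIV, symmetric]]] 
      by (metis at_within_open[OF _ open_UNIV] UNIV_I)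
    then show ?thesis by (simp add: o_def)
  qed
  have tot: "((\<lambda>p. rotT n v p (\<alpha> (rotv v (-p) k)) xs) has_vector_derivative
      (\<Sum>ys\<in>Idx n. P 0 ys * D ys (- cross3 v k) + P' ys * \<alpha> (rotv v (-0) k) ys)) (at 0)"
    unfolding rotT_def P_def[symmetric]
    by (intro has_vector_derivative_sum has_vector_derivative_mult dP dA)
  have s1: "(\<Sum>ys\<in>Idx n. P 0 ys * D ys (- cross3 v k)) = D xs (- cross3 v k)"
  proof -
    have "P 0 ys = (if ys = xs then 1 else 0)" if "ys \<in> Idx n" for ys
      using delta_Idx[OF that xs] P0 unfolding P_def P0_def by simp
    then have "(\<Sum>ys\<in>Idx n. P 0 ys * D ys (- cross3 v k)) = (\<Sum>ys\<in>Idx n. if ys = xs then D ys (- cross3 v k) else 0)"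
      by (intro sum.cong refl) simp
    then show ?thesis using xs by simp
  qed
  have s2: "(\<Sum>ys\<in>Idx n. P' ys * \<alpha> k ys) = spin n v (\<alpha> k) xs"
  proof -
    have "(\<Sum>ys\<in>Idx n. P' ys * \<alpha> k ys) = (\<Sum>i<n. \<Sum>ys\<in>Idx n. dd ys i * (\<Prod>j\<in>{..<n} - {i}. if ys ! j = xs ! j then 1 else 0) * \<alpha> k ys)"
      unfolding P'_def P0 by (simp add: sum_distrib_right sum.swap[of _ "Idx n"])
    also have "\<dots> = (\<Sum>i<n. \<Sum>c\<in>UNIV. complex_of_real (cross3 v (axis c 1) $ (xs ! i)) * \<alpha> k (xs[i := c]))"
      unfolding dd_def by (intro sum.cong refl reindex_upd[OF _ xs]) simp
    finally show ?thesis unfolding spin_def .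
  qed
  show ?thesis using tot unfolding sum.distrib s1 rotv_0 minus_zero
    by (simp add: s2 orb_def orb_D[OF D[OF xs]] add.commute)
qed

lemma curve:
  fixes f :: "real \<Rightarrow> tensor"
  assumes span: "\<forall>p. \<exists>c. \<forall>ys\<in>Idx n. f p ys = c * u ys"
    and N: "ip n u u \<noteq> 0"
    and D: "\<forall>ys\<in>Idx n. ((\<lambda>p. f p ys) has_vector_derivative Dv ys) (at 0)"
    and xs: "xs \<in> Idx n"
  shows "Dv xs = ip n u Dv / ip n u u * u xs"
proof -
  define g where "g p = ip n u (f p) * inverse (ip n u u)" for p
  have fg: "f p xs = g p * u xs" for p
  proof -
    obtain c where c: "\<forall>ys\<in>Idx n. f p ys = c * u ys" using span by blast
    have "g p = c" unfolding g_def ip_span[OF c] using N by simp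
    then show ?thesis using c xs by simp
  qed
  have dg: "(g has_vector_derivative ip n u Dv * inverse (ip n u u)) (at 0)"
    unfolding g_def ip_def
    by (intro has_vector_derivative_mult_left has_vector_derivative_sum has_vector_derivative_mult_right) (use D in auto)
  have "((\<lambda>p. g p * u xs) has_vector_derivative (ip n u Dv * inverse (ip n u u)) * u xs) (at 0)"
    by (intro has_vector_derivative_mult_left dg)
  then have "((\<lambda>p. f p xs) has_vector_derivative (ip n u Dv * inverse (ip n u u)) * u xs) (at 0)"
    by (simp add: fg)
  with D xs have "Dv xs = (ip n u Dv * inverse (ip n u u)) * u xs"
    using vector_derivative_unique_at by blast
  then show ?thesis by (simp add: divide_inverse)
qed

lemma cross_lin: "cross3 v w $ y = (\<Sum>c\<in>UNIV. w$c * cross3 v (axis c 1) $ y)"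
  using exhaust_3[of y] by (elim disjE) (simp_all add: cross3_simps sum_3 axis_def)

lemma pol_cross: "(\<Sum>c\<in>UNIV. complex_of_real (cross3 v (axis c 1) $ y) * pol s E1 E2 c)
   = pol s (cross3 v E1) (cross3 v E2) y"
  unfolding pol_def cross_lin[of v E1] cross_lin[of v E2]
  by (simp add: sum.distrib algebra_simps sum_distrib_left)

lemma K_lemma:
  assumes F: "rhONB F1 F2 u" and s: "s * s = (1::int)"
  shows "(\<Sum>y\<in>UNIV. cnj (pol s F1 F2 y) * (\<Sum>c\<in>UNIV. complex_of_real (cross3 v (axis c 1) $ y) * pol s F1 F2 c))
     = - 2 * \<i> * of_int s * of_real (inner v u)"
proof -
  have s': "(of_int s :: real) * of_int s = 1" using s by (metis of_int_mult of_int_1)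
  let ?G1 = "cross3 v F1" and ?G2 = "cross3 v F2"
  have "\<And>y. cnj (pol s F1 F2 y) * pol s ?G1 ?G2 y =
     of_real (F1$y * ?G1$y + F2$y * ?G2$y) + \<i> * of_int s * of_real (F1$y * ?G2$y - F2$y * ?G1$y)"
    unfolding pol_def using s' by (simp add: complex_eq_iff algebra_simps)
  then have "(\<Sum>y\<in>UNIV. cnj (pol s F1 F2 y) * pol s ?G1 ?G2 y)
     = of_real (inner F1 ?G1 + inner F2 ?G2) + \<i> * of_int s * of_real (inner F1 ?G2 - inner F2 ?G1)"
    by (simp add: inner_vec_def sum.distrib sum_subtractf sum_distrib_left right_diff_distrib)
  moreover have "inner F1 ?G1 = 0" "inner F2 ?G2 = 0" by (simp_all add: cross3_simps)
  moreover have "inner F1 ?G2 = - inner v u" "inner F2 ?G1 = inner v u"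
  proof -
    have u: "u = cross3 F1 F2" using F unfolding rhONB_def by simp
    show "inner F1 ?G2 = - inner v u" "inner F2 ?G1 = inner v u" unfolding u by (simp_all add: cross3_simps)
  qed
  ultimately show ?thesis by (simp add: pol_cross)
qed

lemma prod_split:
  fixes m n :: nat
  assumes "m < n"
  shows "(\<Prod>j<n. f j) = f m * (\<Prod>j\<in>{..<n} - {m}. f j)"
  by (rule prod.remove) (use assms in auto)

lemma spin_ip:
  assumes F: "rhONB F1 F2 u" and s: "s * s = (1::int)" and n: "n \<ge> 1"
  shows "ip n (tpow (pol s F1 F2)) (spin n v (tpow (pol s F1 F2)))
     = of_nat n * (- 2 * \<i> * of_int s * of_real (inner v u)) * 2 ^ (n - 1)"
proof -
  let ?e = "pol s F1 F2"
  define d where "d c y = complex_of_real (cross3 v (axis c 1) $ y)" for c y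
  define G where "G (m::nat) (j::nat) (y::3) = (if j = m then cnj (?e y) * (\<Sum>c\<in>UNIV. d c y * ?e c) else cnj (?e y) * ?e y)" for m j y
  have pw: "cnj (tpow ?e ys) * (\<Sum>c\<in>UNIV. d c (ys ! m) * tpow ?e (ys[m := c])) = (\<Prod>j<n. G m j (ys ! j))"
    if ys: "ys \<in> Idx n" and m: "m < n" for ys m
  proof -
    have ly: "length ys = n" using ys by (simp add: Idx_def)
    have ysc: "ys[m := c] \<in> Idx n" for c using ly by (simp add: Idx_def)
    have R: "tpow ?e (ys[m := c]) = ?e c * (\<Prod>j\<in>{..<n} - {m}. ?e (ys ! j))" for c
    proof -
      have "tpow ?e (ys[m := c]) = (\<Prod>j<n. ?e (ys[m := c] ! j))" by (rule tpow_prod[OF ysc])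
      also have "\<dots> = ?e (ys[m := c] ! m) * (\<Prod>j\<in>{..<n} - {m}. ?e (ys[m := c] ! j))" by (rule prod_split[OF m])
      also have "\<dots> = ?e c * (\<Prod>j\<in>{..<n} - {m}. ?e (ys ! j))"
        using ly m by (auto intro!: prod.cong simp: nth_list_update)
      finally show ?thesis .
    qed
    have L: "tpow ?e ys = ?e (ys ! m) * (\<Prod>j\<in>{..<n} - {m}. ?e (ys ! j))"
      using tpow_prod[OF ys] prod_split[OF m] by simp
    have P1: "(\<Prod>j<n. G m j (ys ! j)) = G m m (ys ! m) * (\<Prod>j\<in>{..<n} - {m}. G m j (ys ! j))"
      by (rule prod_split[OF m])
    have P2: "(\<Prod>j\<in>{..<n} - {m}. G m j (ys ! j)) = (\<Prod>j\<in>{..<n} - {m}. cnj (?e (ys ! j)) * ?e (ys ! j))"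
      by (intro prod.cong refl) (simp add: G_def)
    have P3: "(\<Prod>j\<in>{..<n} - {m}. cnj (?e (ys ! j)) * ?e (ys ! j)) = cnj (\<Prod>j\<in>{..<n} - {m}. ?e (ys ! j)) * (\<Prod>j\<in>{..<n} - {m}. ?e (ys ! j))"
      by (simp only: prod.distrib cnj_prod)
    have P: "(\<Prod>j<n. G m j (ys ! j)) = G m m (ys ! m) * (cnj (\<Prod>j\<in>{..<n} - {m}. ?e (ys ! j)) * (\<Prod>j\<in>{..<n} - {m}. ?e (ys ! j)))"
      unfolding P1 P2 P3 ..
    define Rr where "Rr = (\<Prod>j\<in>{..<n} - {m}. ?e (ys ! j))"
    have S: "(\<Sum>c\<in>UNIV. d c (ys ! m) * tpow ?e (ys[m := c])) = (\<Sum>c\<in>UNIV. d c (ys ! m) * ?e c) * Rr"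
      unfolding R Rr_def by (simp add: sum_distrib_right mult.assoc)
    show ?thesis unfolding P S L unfolding Rr_def[symmetric] G_def by (simp add: mult_ac)
  qed
  have K: "(\<Sum>y\<in>UNIV. G m m y) = - 2 * \<i> * of_int s * of_real (inner v u)" for m
    unfolding G_def d_def using K_lemma[OF F s] by simp
  have two: "(\<Sum>y\<in>UNIV. G m j y) = 2" if "j \<noteq> m" for m j
    unfolding G_def using that pol_norm[OF F s] by simp
  have per_m: "(\<Sum>ys\<in>Idx n. cnj (tpow ?e ys) * (\<Sum>c\<in>UNIV. d c (ys ! m) * tpow ?e (ys[m := c])))
       = (- 2 * \<i> * of_int s * of_real (inner v u)) * 2 ^ (n - 1)" if m: "m < n" for m
  proof -
    have "(\<Sum>ys\<in>Idx n. cnj (tpow ?e ys) * (\<Sum>c\<in>UNIV. d c (ys ! m) * tpow ?e (ys[m := c])))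
       = (\<Sum>ys\<in>Idx n. \<Prod>j<n. G m j (ys ! j))"
      by (intro sum.cong refl pw m)
    also have "\<dots> = (\<Prod>j<n. \<Sum>y\<in>UNIV. G m j y)" by (rule sum_prod_Idx)
    also have "\<dots> = (\<Sum>y\<in>UNIV. G m m y) * (\<Prod>j\<in>{..<n} - {m}. \<Sum>y\<in>UNIV. G m j y)"
      by (rule prod_split[OF m])
    also have "(\<Prod>j\<in>{..<n} - {m}. \<Sum>y\<in>UNIV. G m j y) = (\<Prod>j\<in>{..<n} - {m}. 2)"
      by (intro prod.cong refl two) auto
    also have "\<dots> = 2 ^ (n - 1)" using m by simp
    finally show ?thesis using K by simp
  qed
  have "ip n (tpow ?e) (spin n v (tpow ?e))
      = (\<Sum>m<n. \<Sum>ys\<in>Idx n. cnj (tpow ?e ys) * (\<Sum>c\<in>UNIV. d c (ys ! m) * tpow ?e (ys[m := c])))"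
  proof -
    have "ip n (tpow ?e) (spin n v (tpow ?e))
      = (\<Sum>ys\<in>Idx n. \<Sum>m<n. cnj (tpow ?e ys) * (\<Sum>c\<in>UNIV. d c (ys ! m) * tpow ?e (ys[m := c])))"
      unfolding ip_def spin_def d_def by (intro sum.cong refl) (rule sum_distrib_left)
    also have "\<dots> = (\<Sum>m<n. \<Sum>ys\<in>Idx n. cnj (tpow ?e ys) * (\<Sum>c\<in>UNIV. d c (ys ! m) * tpow ?e (ys[m := c])))"
      by (rule sum.swap)
    finally show ?thesis .
  qed
  also have "\<dots> = (\<Sum>m<n. (- 2 * \<i> * of_int s * of_real (inner v u)) * 2 ^ (n - 1))"
    by (intro sum.cong refl per_m) simp
  finally show ?thesis by simp
qed

lemma Proj_spin:
  assumes h: "h \<noteq> 0" and E: "rhONB E1 E2 (khat k)"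
    and T: "\<forall>ys\<in>Idx (nat \<bar>h\<bar>). T ys = c * uu h k ys" and xs: "xs \<in> Idx (nat \<bar>h\<bar>)"
  shows "Proj h k (\<lambda>ys. \<i> * spin (nat \<bar>h\<bar>) v T ys) xs = of_int h * of_real (inner v (khat k)) * T xs"
proof -
  let ?n = "nat \<bar>h\<bar>"
  have n1: "?n \<ge> 1" using h by simp
  have sp: "\<forall>ys\<in>Idx ?n. \<i> * spin ?n v T ys = (\<i> * c) * spin ?n v (uu h k) ys"
  proof
    fix ys assume ys: "ys \<in> Idx ?n"
    have "\<And>m c'. T (ys[m := c']) = c * uu h k (ys[m := c'])"
      using T ys by (simp add: Idx_def)
    then show "\<i> * spin ?n v T ys = (\<i> * c) * spin ?n v (uu h k) ys"
      unfolding spin_def by (simp add: sum_distrib_left algebra_simps)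
  qed
  have F: "rhONB (fst (FF k)) (snd (FF k)) (khat k)" by (rule FF_ok[OF E])
  have ipS: "ip ?n (uu h k) (spin ?n v (uu h k))
     = of_nat ?n * (- 2 * \<i> * of_int (sgn h) * of_real (inner v (khat k))) * 2 ^ (?n - 1)"
    unfolding uu_def by (rule spin_ip[OF F sgn_sq[OF h] n1])
  have ipU: "ip ?n (uu h k) (uu h k) = 2 ^ ?n" by (rule ip_uu[OF E h])
  have ip1: "ip ?n (uu h k) (\<lambda>ys. \<i> * spin ?n v T ys) = (\<i> * c) * ip ?n (uu h k) (spin ?n v (uu h k))"
    using ip_cong[OF sp] unfolding ip_def by (simp add: sum_distrib_left algebra_simps)
  have pow: "(2::complex) ^ ?n = 2 * 2 ^ (?n - 1)" using n1 by (metis Suc_diff_1 less_le_trans power_Suc zero_less_one)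
  have hn: "(of_nat ?n :: complex) * of_int (sgn h) = of_int h"
    by (metis abs_mult_sgn int_nat_eq abs_ge_zero of_int_mult of_int_of_nat_eq nat_0_le)
  have "Proj h k (\<lambda>ys. \<i> * spin ?n v T ys) xs
     = (\<i> * c) * (of_nat ?n * (- 2 * \<i> * of_int (sgn h) * of_real (inner v (khat k))) * 2 ^ (?n - 1)) / (2 * 2 ^ (?n - 1)) * uu h k xs"
    unfolding Proj_eq ip1 ipS ipU pow ..
  also have "\<dots> = (of_nat ?n * of_int (sgn h)) * of_real (inner v (khat k)) * (c * uu h k xs)"
    by (simp add: field_simps)
  also have "\<dots> = of_int h * of_real (inner v (khat k)) * (c * uu h k xs)" by (simp only: hn)
  finally show ?thesis using T xs by simp
qed

lemma eps_swap: "cross3 (axis a 1) (axis c 1) $ b = - eps a b c"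
  unfolding eps_def
  using exhaust_3[of a] exhaust_3[of b] exhaust_3[of c]
  by (elim disjE) (simp_all add: cross3_simps axis_def)

lemma cross_eps: "cross3 (axis a 1) k $ c = (\<Sum>b\<in>UNIV. eps a b c * k $ b)"
  unfolding eps_def
  using exhaust_3[of a] exhaust_3[of c]
  by (elim disjE) (simp_all add: cross3_simps axis_def sum_3)

lemma Sop_spin: "Sop n a T xs = \<i> * spin n (axis a 1) T xs"
  unfolding Sop_def spin_def eps_swap by (simp add: sum_distrib_left algebra_simps)

lemma Lop_orb: "Lop a \<alpha> k xs = \<i> * orb (axis a 1) \<alpha> k xs"
proof -
  have "(\<Sum>b\<in>UNIV. \<Sum>c\<in>UNIV. complex_of_real (eps a b c * k $ b) * pd c (\<lambda>k'. \<alpha> k' xs) k)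
      = (\<Sum>c\<in>UNIV. complex_of_real (\<Sum>b\<in>UNIV. eps a b c * k $ b) * pd c (\<lambda>k'. \<alpha> k' xs) k)"
    unfolding of_real_sum sum_distrib_right by (rule sum.swap)
  then show ?thesis unfolding Lop_def orb_def cross_eps by simp
qed

theorem mainTheorem1:
  fixes h :: int and \<alpha> :: "real^3 \<Rightarrow> tensor"
  assumes "h \<noteq> 0" and "is_section h \<alpha>"
  shows "\<forall>k. k \<noteq> 0 \<longrightarrow> (\<forall>a xs. xs \<in> Idx (nat \<bar>h\<bar>) \<longrightarrow>
           Jpar h a \<alpha> k xs = PS h a \<alpha> k xs \<and>
           Jperp h a \<alpha> k xs = PL h a \<alpha> k xs \<and>
           Jc h a \<alpha> k xs = complex_of_real (khat k $ a) * Jv h (khat k) \<alpha> k xs + PL h a \<alpha> k xs)"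
proof (intro allI impI)
  fix k :: "real^3" and a :: 3 and xs :: "3 list"
  assume k: "k \<noteq> 0" and xs: "xs \<in> Idx (nat \<bar>h\<bar>)"
  note h = assms(1)
  define n where "n = nat \<bar>h\<bar>"
  have secF: "\<And>k'. k' \<noteq> 0 \<Longrightarrow> \<alpha> k' \<in> fiber h k'" using assms(2) unfolding is_section_def by blast
  have diff: "\<forall>ys\<in>Idx n. (\<lambda>k. \<alpha> k ys) differentiable (at k)"
  proof
    fix ys assume ys: "ys \<in> Idx n"
    then have "smooth_on3 (- {0}) (\<lambda>k. \<alpha> k ys)" using assms(2) unfolding is_section_def n_def by blast
    then have "Ck_on (Suc 0) (- {0}) (\<lambda>k. \<alpha> k ys)" unfolding smooth_on3_def by blast
    then have "(\<lambda>k. \<alpha> k ys) differentiable_on (- {0})" by simp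
    then show "(\<lambda>k. \<alpha> k ys) differentiable (at k)"
      using differentiable_on_eq_differentiable_at[of "- {0}"] k by auto
  qed
  obtain E1 E2 c where E: "rhONB E1 E2 (khat k)" and T: "\<forall>ys\<in>Idx n. \<alpha> k ys = c * uu h k ys"
    using fiber_span[OF h secF[OF k]] unfolding n_def by blast
  have JvF: "Jv h v \<alpha> k ys = \<i> * (spin n v (\<alpha> k) ys + orb v \<alpha> k ys)" if ys: "ys \<in> Idx n" for v ys
    unfolding Jv_def n_def[symmetric] using vector_derivative_at[OF Jv_deriv[OF diff ys]] by simp
  have key: "Proj h k (\<lambda>ys. spin n v (\<alpha> k) ys + orb v \<alpha> k ys) xs = spin n v (\<alpha> k) xs + orb v \<alpha> k xs"
    if v: "norm v = 1" for v
  proof -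
    have span: "\<forall>p. \<exists>c. \<forall>ys\<in>Idx n. rotT n v p (\<alpha> (rotv v (-p) k)) ys = c * uu h k ys"
    proof
      fix p
      have "rotv v (-p) k \<noteq> 0" using rotv_norm[OF v, of "-p" k] k by auto
      then show "\<exists>c. \<forall>ys\<in>Idx n. rotT n v p (\<alpha> (rotv v (-p) k)) ys = c * uu h k ys"
        using rot_fiber[OF h v k secF] unfolding n_def by blast
    qed
    have N: "ip n (uu h k) (uu h k) \<noteq> 0" using ip_uu[OF E h] by simp
    have D: "\<forall>ys\<in>Idx n. ((\<lambda>p. rotT n v p (\<alpha> (rotv v (-p) k)) ys) has_vector_derivative
         (spin n v (\<alpha> k) ys + orb v \<alpha> k ys)) (at 0)"
      using Jv_deriv[OF diff] by blast
    show ?thesis using curve[OF span N D xs[folded n_def]] unfolding Proj_eq n_def by simp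
  qed
  have spinP: "Proj h k (\<lambda>ys. \<i> * spin n v (\<alpha> k) ys) xs = of_int h * of_real (inner v (khat k)) * \<alpha> k xs" for v
    using Proj_spin[OF h E T[unfolded n_def] xs] unfolding n_def .
  have kn: "norm (khat k) = 1" using k unfolding khat_def by simp
  have orb0: "orb (khat k) \<alpha> k ys = 0" for ys
  proof -
    have "cross3 (khat k) k = 0" unfolding khat_def by (simp add: cross_mult_left)
    then show ?thesis unfolding orb_def by simp
  qed
  have kk: "inner (khat k) (khat k) = 1" using kn by (simp add: vv1)
  have JvK: "Jv h (khat k) \<alpha> k xs = of_int h * \<alpha> k xs"
  proof -
    have "Jv h (khat k) \<alpha> k xs = \<i> * Proj h k (\<lambda>ys. spin n (khat k) (\<alpha> k) ys + orb (khat k) \<alpha> k ys) xs"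
      using JvF[OF xs[folded n_def]] key[OF kn] by simp
    also have "\<dots> = Proj h k (\<lambda>ys. \<i> * spin n (khat k) (\<alpha> k) ys) xs"
      by (simp add: orb0 Proj_scale)
    also have "\<dots> = of_int h * \<alpha> k xs" using spinP kk by simp
    finally show ?thesis .
  qed
  have ia: "inner (axis a 1) (khat k) = khat k $ a" by (simp add: inner_axis')
  have JparE: "Jpar h a \<alpha> k xs = of_real (khat k $ a) * of_int h * \<alpha> k xs"
    unfolding Jpar_def JvK by simp
  have PSE: "PS h a \<alpha> k xs = of_int h * of_real (khat k $ a) * \<alpha> k xs"
  proof -
    have "PS h a \<alpha> k xs = Proj h k (\<lambda>ys. \<i> * spin n (axis a 1) (\<alpha> k) ys) xs"
      unfolding PS_def n_def[symmetric] Sop_spin ..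
    then show ?thesis using spinP ia by simp
  qed
  have c1: "Jpar h a \<alpha> k xs = PS h a \<alpha> k xs" using JparE PSE by (simp add: mult_ac)
  have c2: "Jperp h a \<alpha> k xs = PL h a \<alpha> k xs"
  proof -
    let ?S = "\<lambda>ys. spin n (axis a 1) (\<alpha> k) ys" and ?O = "\<lambda>ys. orb (axis a 1) \<alpha> k ys"
    have "PL h a \<alpha> k xs = Proj h k (\<lambda>ys. \<i> * ?O ys) xs"
      unfolding PL_def Lop_orb ..
    also have "(\<lambda>ys. \<i> * ?O ys) = (\<lambda>ys. \<i> * (?S ys + ?O ys) + (-1) * (\<i> * ?S ys))"
      by (simp add: algebra_simps)
    also have "Proj h k \<dots> xs = \<i> * Proj h k (\<lambda>ys. ?S ys + ?O ys) xs + (-1) * Proj h k (\<lambda>ys. \<i> * ?S ys) xs"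
      by (simp only: Proj_add Proj_scale)
    also have "\<dots> = \<i> * (?S xs + ?O xs) - of_int h * of_real (khat k $ a) * \<alpha> k xs"
      using key[of "axis a 1"] spinP[of "axis a 1"] ia by simp
    also have "\<dots> = Jc h a \<alpha> k xs - Jpar h a \<alpha> k xs"
      unfolding Jc_def JvF[OF xs[folded n_def]] JparE by (simp add: mult_ac)
    finally show ?thesis unfolding Jperp_def by simp
  qed
  have c3: "Jc h a \<alpha> k xs = complex_of_real (khat k $ a) * Jv h (khat k) \<alpha> k xs + PL h a \<alpha> k xs"
    using c2 unfolding Jperp_def Jpar_def by (simp add: algebra_simps)
  show "Jpar h a \<alpha> k xs = PS h a \<alpha> k xs \<and> Jperp h a \<alpha> k xs = PL h a \<alpha> k xs \<and>
        Jc h a \<alpha> k xs = complex_of_real (khat k $ a) * Jv h (khat k) \<alpha> k xs + PL h a \<alpha> k xs"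
    using c1 c2 c3 by blast
qed

end
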